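(* Let the prior joint distribution of the losses $(X,Y)$ be bivariate normal $\mathcal{N}(\boldsymbol{\mu},\boldsymbol{\Sigma})$ with $\boldsymbol{\mu}=(\mu_X,\mu_Y)^\top$, $\boldsymbol{\Sigma}=\begin{pmatrix}\sigma_X^2 & \rho\sigma_X\sigma_Y\\ \rho\sigma_X\sigma_Y & \sigma_Y^2\end{pmatrix}$, $\sigma_X,\sigma_Y>0$, $|\rho|<1$. Let $\mu_1\in\mathbb{R}$, $\alpha\in(0,1)$, and let $\tilde\mu_X$ denote the posterior expectation of $X$ (under the entropy-pooling posterior described in the context). (i) Under the equality view $\tilde\mu_X=\mu_1$, $$\mathrm{CoVaR}_\alpha^{Y|\tilde\mu_X=\mu_1}=\mu_Y+\rho(\mu_1-\mu_X)\frac{\sigma_Y}{\sigma_X}+\sigma_Y\Phi^{-1}(\alpha).$$ (ii) Under the inequality view $\tilde\mu_X\le\mu_1$: if $\mu_X\le\mu_1$, then $\mathrm{CoVaR}_\alpha^{Y|\tilde\mu_X\le\mu_1}=\mathrm{VaR}_\alpha^Y$; if $\mu_X>\mu_1$, then $\mathrm{CoVaR}_\alpha^{Y|\tilde\mu_X\le\mu_1}=\mathrm{CoVaR}_\alpha^{Y|\tilde\mu_X=\mu_1}$. (iii) Under the inequality view $\tilde\mu_X\ge\mu_1$: if $\mu_X\ge\mu_1$, then $\mathrm{CoVaR}_\alpha^{Y|\tilde\mu_X\ge\mu_1}=\mathrm{VaR}_\alpha^Y$; if $\mu_X<\mu_1$, then $\mathrm{CoVaR}_\alpha^{Y|\tild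e\mu_X\ge\mu_1}=\mathrm{CoVaR}_\alpha^{Y|\tilde\mu_X=\mu_1}$.
   Context: Entropy-pooling framework: given a "view" $V$ (a constraint on the posterior parameters), the posterior distribution of $(X,Y)$ is the bivariate normal distribution $\mathcal{N}(\tilde{\boldsymbol{\mu}},\tilde{\boldsymbol{\Sigma}})$, with $\tilde{\boldsymbol{\mu}}=(\tilde\mu_X,\tilde\mu_Y)^\top$ and nonsingular $\tilde{\boldsymbol{\Sigma}}=\begin{pmatrix}\tilde\sigma_X^2 & \tilde\rho\tilde\sigma_X\tilde\sigma_Y\\ \tilde\rho\tilde\sigma_X\tilde\sigma_Y & \tilde\sigma_Y^2\end{pmatrix}$, that minimizes the relative entropy (Kullback–Leibler divergence) $\varepsilon(\tilde f,f)=\int \tilde f\,(\ln\tilde f-\ln f)$ of its density $\tilde f$ with respect to the prior density $f$, among all bivariate normal distributions satisfying $V$. The general CoVaR under view $V$ is the $\alpha$-quantile of the posterior marginal of $Y$: $\mathrm{CoVaR}_\alpha^{Y|V}=\tilde\mu_Y+\tilde\sigma_Y\Phi^{-1}(\alpha)$, where $\Phi$ is the standard normal cdf. $\mathrm{VaR}_\alpha^Y=\mu_Y+\sigma_Y\Phi^{-1}(\alpha)$ is the prior $\alpha$-quantile of $Y$. *)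

theory Defs
  imports "HOL-Probability.Probability"
begin

text \<open>Parameters of a bivariate normal distribution N(mu, Sigma) with
  mu = (mX, mY), Sigma = ((sX^2, rho sX sY), (rho sX sY, sY^2)).\<close>
record bvn =
  mX :: real
  mY :: real
  sX :: real
  sY :: real
  rho :: real

definition valid_bvn :: "bvn \<Rightarrow> bool" where
  "valid_bvn p \<longleftrightarrow> sX p > 0 \<and> sY p > 0 \<and> \<bar>rho p\<bar> < 1"

definition bvn_density :: "bvn \<Rightarrow> real \<times> real \<Rightarrow> real" where
  "bvn_density p z = (case z of (x, y) \<Rightarrow>
     exp (- (1 / (2 * (1 - (rho p)\<^sup>2))) *
            ((x - mX p)\<^sup>2 / (sX p)\<^sup>2
             - 2 * rho p * (x - mX p) * (y - mY p) / (sX p * sY p)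
             + (y - mY p)\<^sup>2 / (sY p)\<^sup>2))
     / (2 * pi * sX p * sY p * sqrt (1 - (rho p)\<^sup>2)))"

definition rel_entropy :: "bvn \<Rightarrow> bvn \<Rightarrow> real" where
  "rel_entropy q p =
     integral\<^sup>L lborel (\<lambda>z. bvn_density q z * (ln (bvn_density q z) - ln (bvn_density p z)))"

definition is_posterior :: "bvn \<Rightarrow> (bvn \<Rightarrow> bool) \<Rightarrow> bvn \<Rightarrow> bool" where
  "is_posterior p V q \<longleftrightarrow> valid_bvn q \<and> V q \<and>
     (\<forall>q'. valid_bvn q' \<and> V q' \<longrightarrow> rel_entropy q p \<le> rel_entropy q' p)"

definition Phi :: "real \<Rightarrow> real" where
  "Phi x = (LBINT t:{..x}. std_normal_density t)"

definition Phi_inv :: "real \<Rightarrow> real" where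
  "Phi_inv a = (THE x. Phi x = a)"

definition VaR :: "real \<Rightarrow> bvn \<Rightarrow> real" where
  "VaR \<alpha> p = mY p + sY p * Phi_inv \<alpha>"

text \<open>General CoVaR: alpha-quantile of the posterior marginal of Y.\<close>
definition CoVaR_post :: "real \<Rightarrow> bvn \<Rightarrow> real" where
  "CoVaR_post \<alpha> q = mY q + sY q * Phi_inv \<alpha>"

definition CoVaR_is :: "real \<Rightarrow> bvn \<Rightarrow> (bvn \<Rightarrow> bool) \<Rightarrow> real \<Rightarrow> bool" where
  "CoVaR_is \<alpha> p V c \<longleftrightarrow> (\<exists>q. is_posterior p V q) \<and>
     (\<forall>q. is_posterior p V q \<longrightarrow> CoVaR_post \<alpha> q = c)"

end

theory Submission
  imports Defs
begin


lemma nd_quad: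
  fixes \<mu> \<sigma> A B C :: real
  assumes s: "0 < \<sigma>"
  shows "has_bochner_integral lborel (\<lambda>x. normal_density \<mu> \<sigma> x * (A + B*(x-\<mu>) + C*(x-\<mu>)^2)) (A + C*\<sigma>^2)"
proof -
  have e0: "has_bochner_integral lborel (\<lambda>x. normal_density \<mu> \<sigma> x * (x - \<mu>)^(2*0)) (fact (2 * 0) / ((2 / \<sigma>\<^sup>2)^0 * fact 0))"
    by (rule normal_moment_even[OF s])
  have e1: "has_bochner_integral lborel (\<lambda>x. normal_density \<mu> \<sigma> x * (x - \<mu>)^(2*1)) (fact (2 * 1) / ((2 / \<sigma>\<^sup>2)^1 * fact 1))"
    by (rule normal_moment_even[OF s])
  have o0: "has_bochner_integral lborel (\<lambda>x. normal_density \<mu> \<sigma> x * (x - \<mu>)^(2*0+1)) 0"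
    by (rule normal_moment_odd[OF s])
  have e0': "has_bochner_integral lborel (\<lambda>x. A * normal_density \<mu> \<sigma> x) A"
    using has_bochner_integral_mult_right[OF e0, of A] by simp
  have e1': "has_bochner_integral lborel (\<lambda>x. C * (normal_density \<mu> \<sigma> x * (x - \<mu>)^2)) (C*\<sigma>^2)"
  proof -
    have v: "fact (2 * 1) / ((2 / \<sigma>\<^sup>2)^1 * fact 1) = (\<sigma>^2::real)" using s by (simp add: field_simps)
    show ?thesis using has_bochner_integral_mult_right[OF e1[unfolded v], of C] by simp
  qed
  have o0': "has_bochner_integral lborel (\<lambda>x. B * (normal_density \<mu> \<sigma> x * (x - \<mu>))) 0"
    using has_bochner_integral_mult_right[OF o0, of B] by simp
  have "has_bochner_integral lborel (\<lambda>x. A * normal_density \<mu> \<sigma> x + B * (normal_density \<mu> \<sigma> x * (x - \<mu>)) + C * (normal_density \<mu> \<sigma> x * (x - \<mu>)^2)) (A + 0 + C*\<sigma>^2)"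
    by (intro has_bochner_integral_add e0' e1' o0')
  then show ?thesis by (simp add: algebra_simps)
qed



lemma fact_exp:
  fixes x y mx my sx sy r :: real
  assumes sx: "sx > 0" and sy: "sy > 0" and r: "\<bar>r\<bar> < 1"
  shows "exp (- (1 / (2 * (1 - r\<^sup>2))) *
            ((x - mx)\<^sup>2 / sx\<^sup>2 - 2 * r * (x - mx) * (y - my) / (sx * sy) + (y - my)\<^sup>2 / sy\<^sup>2))
     / (2 * pi * sx * sy * sqrt (1 - r\<^sup>2))
   = normal_density mx sx x * normal_density (my + r * sy / sx * (x - mx)) (sy * sqrt (1 - r\<^sup>2)) y"
proof -
  have r2: "0 < 1 - r\<^sup>2" using r by (simp add: abs_square_less_1)
  have sq: "sqrt (1 - r\<^sup>2) ^ 2 = 1 - r\<^sup>2" using r2 by simp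
  have sqp: "sqrt (1 - r\<^sup>2) > 0" using r2 by simp
  have c1: "sqrt (2 * pi * sx\<^sup>2) = sqrt (2*pi) * sx" using sx by (simp add: real_sqrt_mult)
  have c2: "sqrt (2 * pi * (sy * sqrt (1 - r\<^sup>2))\<^sup>2) = sqrt (2*pi) * sy * sqrt (1 - r\<^sup>2)"
    using sy sqp by (simp add: real_sqrt_mult power_mult_distrib)
  have c3: "sqrt (2*pi) * sqrt (2*pi) = 2 * pi" by simp
  have ex: "- (1 / (2 * (1 - r\<^sup>2))) *
            ((x - mx)\<^sup>2 / sx\<^sup>2 - 2 * r * (x - mx) * (y - my) / (sx * sy) + (y - my)\<^sup>2 / sy\<^sup>2)
      = -(x - mx)\<^sup>2/ (2 * sx\<^sup>2) + -(y - (my + r * sy / sx * (x - mx)))\<^sup>2/ (2 * (sy * sqrt (1 - r\<^sup>2))\<^sup>2)"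
  proof -
    define u where "u = (x - mx) / sx"
    define v where "v = (y - my) / sy"
    have hx: "x - mx = sx * u" using sx by (simp add: u_def)
    have hy: "y - my = sy * v" using sy by (simp add: v_def)
    have hz: "y - (my + r * sy / sx * (x - mx)) = sy * (v - r * u)"
      using sx sy by (simp add: u_def v_def field_simps)
    have L: "(x - mx)\<^sup>2 / sx\<^sup>2 - 2 * r * (x - mx) * (y - my) / (sx * sy) + (y - my)\<^sup>2 / sy\<^sup>2
       = u\<^sup>2 - 2 * r * u * v + v\<^sup>2"
      unfolding hx hy using sx sy by (simp add: field_simps power2_eq_square)
    have R1: "-(x - mx)\<^sup>2/ (2 * sx\<^sup>2) = - u\<^sup>2/2" unfolding hx using sx by (simp add: field_simps power2_eq_square)
    have R2: "-(y - (my + r * sy / sx * (x - mx)))\<^sup>2/ (2 * (sy * sqrt (1 - r\<^sup>2))\<^sup>2)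
        = - (v - r * u)\<^sup>2 / (2 * (1 - r\<^sup>2))"
      unfolding hz power_mult_distrib sq using sy r2 by (simp add: field_simps)
    show ?thesis unfolding L R1 R2 using r2 by (simp add: field_simps) (simp add: power2_eq_square algebra_simps power4_eq_xxxx)
  qed
  show ?thesis
    unfolding normal_density_def c1 c2 ex exp_add
    using sx sy sqp by (simp add: field_simps c3[symmetric])
qed



definition Pq :: "real \<Rightarrow> real \<Rightarrow> real \<Rightarrow> real \<Rightarrow> real \<Rightarrow> real \<Rightarrow> real \<Rightarrow> real \<Rightarrow> real" where
  "Pq a b c0 c3 c4 c5 x y = c0 + c3 * (x - a)\<^sup>2 + c4 * (x - a) * (y - b) + c5 * (y - b)\<^sup>2"

definition Gd :: "real \<Rightarrow> real \<Rightarrow> real \<Rightarrow> real \<Rightarrow> real \<Rightarrow> real \<Rightarrow> real \<Rightarrow> real" where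
  "Gd mx my sx sy r x y = normal_density mx sx x * normal_density (my + r * sy / sx * (x - mx)) (sy * sqrt (1 - r\<^sup>2)) y"

lemma Gd_nonneg: "0 \<le> Gd mx my sx sy r x y"
  by (simp add: Gd_def)

lemma Gd_meas[measurable]: "(\<lambda>z. Gd mx my sx sy r (fst z) (snd z)) \<in> borel_measurable (lborel \<Otimes>\<^sub>M lborel)"
  unfolding Gd_def normal_density_def by measurable

lemma Pq_meas[measurable]: "(\<lambda>z. Pq a b c0 c3 c4 c5 (fst z) (snd z)) \<in> borel_measurable (lborel \<Otimes>\<^sub>M lborel)"
  unfolding Pq_def by measurable

context
  fixes mx my sx sy r :: real
  assumes sx: "sx > 0" and sy: "sy > 0" and r: "\<bar>r\<bar> < 1"
begin

lemma r2: "0 < 1 - r\<^sup>2" using r by (simp add: abs_square_less_1)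

lemma s2pos: "0 < sy * sqrt (1 - r\<^sup>2)" using r2 sy by simp

lemma inner:
  "has_bochner_integral lborel (\<lambda>y. Gd mx my sx sy r x y * Pq a b c0 c3 c4 c5 x y)
     (normal_density mx sx x *
       (c0 + c3 * (x - a)\<^sup>2 + c4 * (x - a) * ((my + r * sy / sx * (x - mx)) - b)
         + c5 * ((my + r * sy / sx * (x - mx)) - b)\<^sup>2 + c5 * (sy * sqrt (1 - r\<^sup>2))\<^sup>2))"
proof -
  define m where "m = my + r * sy / sx * (x - mx)"
  define s where "s = sy * sqrt (1 - r\<^sup>2)"
  have h: "has_bochner_integral lborel (\<lambda>y. normal_density m s y *
      ((c0 + c3 * (x - a)\<^sup>2 + c4 * (x - a) * (m - b) + c5 * (m - b)\<^sup>2)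
       + (c4 * (x - a) + 2 * c5 * (m - b)) * (y - m) + c5 * (y - m)\<^sup>2))
      ((c0 + c3 * (x - a)\<^sup>2 + c4 * (x - a) * (m - b) + c5 * (m - b)\<^sup>2) + c5 * s\<^sup>2)"
    using nd_quad[OF s2pos] unfolding s_def by blast
  have h2: "has_bochner_integral lborel (\<lambda>y. normal_density mx sx x * (normal_density m s y *
      ((c0 + c3 * (x - a)\<^sup>2 + c4 * (x - a) * (m - b) + c5 * (m - b)\<^sup>2)
       + (c4 * (x - a) + 2 * c5 * (m - b)) * (y - m) + c5 * (y - m)\<^sup>2)))
      (normal_density mx sx x * ((c0 + c3 * (x - a)\<^sup>2 + c4 * (x - a) * (m - b) + c5 * (m - b)\<^sup>2) + c5 * s\<^sup>2))"
    by (rule has_bochner_integral_mult_right[OF h])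
  have e: "(\<lambda>y. normal_density mx sx x * (normal_density m s y *
      ((c0 + c3 * (x - a)\<^sup>2 + c4 * (x - a) * (m - b) + c5 * (m - b)\<^sup>2)
       + (c4 * (x - a) + 2 * c5 * (m - b)) * (y - m) + c5 * (y - m)\<^sup>2)))
     = (\<lambda>y. Gd mx my sx sy r x y * Pq a b c0 c3 c4 c5 x y)"
  proof (rule ext)
    fix y
    have p: "Pq a b c0 c3 c4 c5 x y = (c0 + c3 * (x - a)\<^sup>2 + c4 * (x - a) * (m - b) + c5 * (m - b)\<^sup>2)
       + (c4 * (x - a) + 2 * c5 * (m - b)) * (y - m) + c5 * (y - m)\<^sup>2"
      unfolding Pq_def by (simp add: power2_eq_square algebra_simps)
    have g: "Gd mx my sx sy r x y = normal_density mx sx x * normal_density m s y"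
      unfolding Gd_def m_def s_def ..
    show "normal_density mx sx x * (normal_density m s y *
      ((c0 + c3 * (x - a)\<^sup>2 + c4 * (x - a) * (m - b) + c5 * (m - b)\<^sup>2)
       + (c4 * (x - a) + 2 * c5 * (m - b)) * (y - m) + c5 * (y - m)\<^sup>2))
     = Gd mx my sx sy r x y * Pq a b c0 c3 c4 c5 x y" unfolding p g by simp
  qed
  have h3: "has_bochner_integral lborel (\<lambda>y. Gd mx my sx sy r x y * Pq a b c0 c3 c4 c5 x y) (normal_density mx sx x * ((c0 + c3 * (x - a)\<^sup>2 + c4 * (x - a) * (m - b) + c5 * (m - b)\<^sup>2) + c5 * s\<^sup>2))"
    using h2 e by simp
  show ?thesis using h3 unfolding m_def s_def .
qed

lemma outer:
  "has_bochner_integral lborel (\<lambda>x. normal_density mx sx x *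
       (c0 + c3 * (x - a)\<^sup>2 + c4 * (x - a) * ((my + r * sy / sx * (x - mx)) - b)
         + c5 * ((my + r * sy / sx * (x - mx)) - b)\<^sup>2 + c5 * (sy * sqrt (1 - r\<^sup>2))\<^sup>2))
     (c0 + c3 * (sx\<^sup>2 + (mx - a)\<^sup>2) + c4 * (r * sx * sy + (mx - a) * (my - b)) + c5 * (sy\<^sup>2 + (my - b)\<^sup>2))"
proof -
  define k where "k = r * sy / sx"
  define A0 where "A0 = c0 + c3 * (mx - a)\<^sup>2 + c4 * (mx - a) * (my - b) + c5 * (my - b)\<^sup>2 + c5 * (sy * sqrt (1 - r\<^sup>2))\<^sup>2"
  define B0 where "B0 = 2 * c3 * (mx - a) + c4 * ((mx - a) * k + (my - b)) + 2 * c5 * k * (my - b)"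
  define C0 where "C0 = c3 + c4 * k + c5 * k\<^sup>2"
  have h: "has_bochner_integral lborel (\<lambda>x. normal_density mx sx x * (A0 + B0 * (x - mx) + C0 * (x - mx)\<^sup>2)) (A0 + C0 * sx\<^sup>2)"
    by (rule nd_quad[OF sx])
  have e: "(\<lambda>x. normal_density mx sx x * (A0 + B0 * (x - mx) + C0 * (x - mx)\<^sup>2)) = (\<lambda>x. normal_density mx sx x *
       (c0 + c3 * (x - a)\<^sup>2 + c4 * (x - a) * ((my + r * sy / sx * (x - mx)) - b)
         + c5 * ((my + r * sy / sx * (x - mx)) - b)\<^sup>2 + c5 * (sy * sqrt (1 - r\<^sup>2))\<^sup>2))"
    by (rule ext) (simp add: A0_def B0_def C0_def k_def[symmetric] power2_eq_square algebra_simps)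
  have sq: "sqrt (1 - r\<^sup>2) ^ 2 = 1 - r\<^sup>2" using r2 by simp
  have v: "A0 + C0 * sx\<^sup>2 = c0 + c3 * (sx\<^sup>2 + (mx - a)\<^sup>2) + c4 * (r * sx * sy + (mx - a) * (my - b)) + c5 * (sy\<^sup>2 + (my - b)\<^sup>2)"
    unfolding A0_def C0_def k_def power_mult_distrib sq using sx by (simp add: field_simps power2_eq_square)
  show ?thesis using h unfolding e v .
qed


lemma prod_int_nonneg:
  assumes nn: "\<And>x y. 0 \<le> Pq a b c0 c3 c4 c5 x y"
  shows "integrable (lborel \<Otimes>\<^sub>M lborel) (\<lambda>z. Gd mx my sx sy r (fst z) (snd z) * Pq a b c0 c3 c4 c5 (fst z) (snd z))"
proof (rule lborel_pair.Fubini_integrable)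
  show "(\<lambda>z. Gd mx my sx sy r (fst z) (snd z) * Pq a b c0 c3 c4 c5 (fst z) (snd z)) \<in> borel_measurable (lborel \<Otimes>\<^sub>M lborel)"
    by (intro borel_measurable_times Gd_meas Pq_meas)
  have eq: "(\<lambda>x. \<integral>y. norm (Gd mx my sx sy r (fst (x, y)) (snd (x, y)) * Pq a b c0 c3 c4 c5 (fst (x, y)) (snd (x, y))) \<partial>lborel)
     = (\<lambda>x. normal_density mx sx x *
       (c0 + c3 * (x - a)\<^sup>2 + c4 * (x - a) * ((my + r * sy / sx * (x - mx)) - b)
         + c5 * ((my + r * sy / sx * (x - mx)) - b)\<^sup>2 + c5 * (sy * sqrt (1 - r\<^sup>2))\<^sup>2))"
  proof (rule ext)
    fix x
    have "(\<lambda>y. norm (Gd mx my sx sy r (fst (x, y)) (snd (x, y)) * Pq a b c0 c3 c4 c5 (fst (x, y)) (snd (x, y))))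
       = (\<lambda>y. Gd mx my sx sy r x y * Pq a b c0 c3 c4 c5 x y)"
      using nn Gd_nonneg by (intro ext) simp
    then show "(\<integral>y. norm (Gd mx my sx sy r (fst (x, y)) (snd (x, y)) * Pq a b c0 c3 c4 c5 (fst (x, y)) (snd (x, y))) \<partial>lborel) = normal_density mx sx x *
       (c0 + c3 * (x - a)\<^sup>2 + c4 * (x - a) * ((my + r * sy / sx * (x - mx)) - b)
         + c5 * ((my + r * sy / sx * (x - mx)) - b)\<^sup>2 + c5 * (sy * sqrt (1 - r\<^sup>2))\<^sup>2)"
      using has_bochner_integral_integral_eq[OF inner] by simp
  qed
  show "integrable lborel (\<lambda>x. \<integral>y. norm (Gd mx my sx sy r (fst (x, y)) (snd (x, y)) * Pq a b c0 c3 c4 c5 (fst (x, y)) (snd (x, y))) \<partial>lborel)"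
    unfolding eq using outer by (rule integrable.intros)
  show "AE x in lborel. integrable lborel (\<lambda>y. Gd mx my sx sy r (fst (x, y)) (snd (x, y)) * Pq a b c0 c3 c4 c5 (fst (x, y)) (snd (x, y)))"
  proof (rule AE_I2)
    fix x
    show "integrable lborel (\<lambda>y. Gd mx my sx sy r (fst (x, y)) (snd (x, y)) * Pq a b c0 c3 c4 c5 (fst (x, y)) (snd (x, y)))"
      using integrable.intros[OF inner[of x a b c0 c3 c4 c5]] by simp
  qed
qed

lemma Pq_bound: "\<bar>Pq a b c0 c3 c4 c5 x y\<bar> \<le> Pq a b (\<bar>c0\<bar>+\<bar>c3\<bar>+\<bar>c4\<bar>+\<bar>c5\<bar>) (\<bar>c0\<bar>+\<bar>c3\<bar>+\<bar>c4\<bar>+\<bar>c5\<bar>) 0 (\<bar>c0\<bar>+\<bar>c3\<bar>+\<bar>c4\<bar>+\<bar>c5\<bar>) x y"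
proof -
  define u where "u = x - a"
  define v where "v = y - b"
  have uv: "\<bar>u * v\<bar> \<le> u\<^sup>2 + v\<^sup>2"
  proof -
    have "0 \<le> (\<bar>u\<bar> - \<bar>v\<bar>)\<^sup>2" by simp
    then have "2 * \<bar>u\<bar> * \<bar>v\<bar> \<le> u\<^sup>2 + v\<^sup>2" by (simp add: power2_eq_square algebra_simps)
    moreover have "0 \<le> \<bar>u\<bar> * \<bar>v\<bar>" by simp
    ultimately have "\<bar>u\<bar> * \<bar>v\<bar> \<le> u\<^sup>2 + v\<^sup>2" by linarith
    then show ?thesis by (simp add: abs_mult)
  qed
  have t1: "\<bar>c4 * u * v\<bar> \<le> \<bar>c4\<bar> * (u\<^sup>2 + v\<^sup>2)"
    using mult_left_mono[OF uv, of "\<bar>c4\<bar>"] by (simp add: abs_mult mult.assoc)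
  have t3: "\<bar>c3 * u\<^sup>2\<bar> = \<bar>c3\<bar> * u\<^sup>2" by (simp add: abs_mult)
  have t5: "\<bar>c5 * v\<^sup>2\<bar> = \<bar>c5\<bar> * v\<^sup>2" by (simp add: abs_mult)
  have "\<bar>c0 + c3 * u\<^sup>2 + c4 * u * v + c5 * v\<^sup>2\<bar> \<le> \<bar>c0\<bar> + \<bar>c3\<bar> * u\<^sup>2 + \<bar>c4\<bar> * (u\<^sup>2 + v\<^sup>2) + \<bar>c5\<bar> * v\<^sup>2"
    using t1 t3 t5 by (smt (verit))
  also have "\<dots> \<le> (\<bar>c0\<bar>+\<bar>c3\<bar>+\<bar>c4\<bar>+\<bar>c5\<bar>) + (\<bar>c0\<bar>+\<bar>c3\<bar>+\<bar>c4\<bar>+\<bar>c5\<bar>) * u\<^sup>2 + 0 * u * v + (\<bar>c0\<bar>+\<bar>c3\<bar>+\<bar>c4\<bar>+\<bar>c5\<bar>) * v\<^sup>2"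
  proof -
    have "0 \<le> u\<^sup>2" "0 \<le> v\<^sup>2" by simp_all
    then have "0 \<le> (\<bar>c0\<bar> + \<bar>c5\<bar>) * u\<^sup>2" "0 \<le> (\<bar>c0\<bar> + \<bar>c3\<bar>) * v\<^sup>2" by simp_all
    then show ?thesis by (simp add: algebra_simps)
  qed
  finally show ?thesis unfolding Pq_def u_def v_def .
qed

lemma prod_int:
  "integrable (lborel \<Otimes>\<^sub>M lborel) (\<lambda>z. Gd mx my sx sy r (fst z) (snd z) * Pq a b c0 c3 c4 c5 (fst z) (snd z))"
proof (rule Bochner_Integration.integrable_bound)
  define K where "K = \<bar>c0\<bar>+\<bar>c3\<bar>+\<bar>c4\<bar>+\<bar>c5\<bar>"
  have nn: "0 \<le> Pq a b K K 0 K x y" for x y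
    using order_trans[OF abs_ge_zero Pq_bound[of a b c0 c3 c4 c5 x y]] unfolding K_def .
  show "integrable (lborel \<Otimes>\<^sub>M lborel) (\<lambda>z. Gd mx my sx sy r (fst z) (snd z) * Pq a b K K 0 K (fst z) (snd z))"
    by (rule prod_int_nonneg[OF nn])
  show "(\<lambda>z. Gd mx my sx sy r (fst z) (snd z) * Pq a b c0 c3 c4 c5 (fst z) (snd z)) \<in> borel_measurable (lborel \<Otimes>\<^sub>M lborel)"
    by (intro borel_measurable_times Gd_meas Pq_meas)
  show "AE z in lborel \<Otimes>\<^sub>M lborel. norm (Gd mx my sx sy r (fst z) (snd z) * Pq a b c0 c3 c4 c5 (fst z) (snd z)) \<le> norm (Gd mx my sx sy r (fst z) (snd z) * Pq a b K K 0 K (fst z) (snd z))"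
  proof (rule AE_I2)
    fix z :: "real \<times> real"
    have "\<bar>Pq a b c0 c3 c4 c5 (fst z) (snd z)\<bar> \<le> Pq a b K K 0 K (fst z) (snd z)"
      using Pq_bound unfolding K_def by blast
    then show "norm (Gd mx my sx sy r (fst z) (snd z) * Pq a b c0 c3 c4 c5 (fst z) (snd z)) \<le> norm (Gd mx my sx sy r (fst z) (snd z) * Pq a b K K 0 K (fst z) (snd z))"
      using Gd_nonneg[of mx my sx sy r "fst z" "snd z"] nn[of "fst z" "snd z"]
      by (simp add: abs_mult mult_left_mono)
  qed
qed

lemma prod_hbi:
  "has_bochner_integral (lborel \<Otimes>\<^sub>M lborel) (\<lambda>z. Gd mx my sx sy r (fst z) (snd z) * Pq a b c0 c3 c4 c5 (fst z) (snd z))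
     (c0 + c3 * (sx\<^sup>2 + (mx - a)\<^sup>2) + c4 * (r * sx * sy + (mx - a) * (my - b)) + c5 * (sy\<^sup>2 + (my - b)\<^sup>2))"
proof -
  have i: "integrable (lborel \<Otimes>\<^sub>M lborel) (\<lambda>z. Gd mx my sx sy r (fst z) (snd z) * Pq a b c0 c3 c4 c5 (fst z) (snd z))"
    by (rule prod_int)
  have "integral\<^sup>L (lborel \<Otimes>\<^sub>M lborel) (\<lambda>z. Gd mx my sx sy r (fst z) (snd z) * Pq a b c0 c3 c4 c5 (fst z) (snd z))
     = (\<integral>x. (\<integral>y. Gd mx my sx sy r (fst (x,y)) (snd (x,y)) * Pq a b c0 c3 c4 c5 (fst (x,y)) (snd (x,y)) \<partial>lborel) \<partial>lborel)"
    using lborel_pair.integral_fst'[OF i] by simp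
  also have "\<dots> = (\<integral>x. normal_density mx sx x *
       (c0 + c3 * (x - a)\<^sup>2 + c4 * (x - a) * ((my + r * sy / sx * (x - mx)) - b)
         + c5 * ((my + r * sy / sx * (x - mx)) - b)\<^sup>2 + c5 * (sy * sqrt (1 - r\<^sup>2))\<^sup>2) \<partial>lborel)"
    using has_bochner_integral_integral_eq[OF inner] by simp
  also have "\<dots> = c0 + c3 * (sx\<^sup>2 + (mx - a)\<^sup>2) + c4 * (r * sx * sy + (mx - a) * (my - b)) + c5 * (sy\<^sup>2 + (my - b)\<^sup>2)"
    using has_bochner_integral_integral_eq[OF outer] .
  finally show ?thesis using i by (simp add: has_bochner_integral_iff)
qed

end

lemma bvn_Gd: "valid_bvn q \<Longrightarrow> bvn_density q z = Gd (mX q) (mY q) (sX q) (sY q) (rho q) (fst z) (snd z)"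
proof -
  assume v: "valid_bvn q"
  obtain x y where z: "z = (x, y)" by (cases z)
  show ?thesis
    unfolding Gd_def z bvn_density_def prod.case fst_conv snd_conv
    by (rule fact_exp) (use v in \<open>auto simp: valid_bvn_def\<close>)
qed

lemma bvn_hbi:
  assumes v: "valid_bvn q"
  shows "has_bochner_integral lborel (\<lambda>z. bvn_density q z * Pq a b c0 c3 c4 c5 (fst z) (snd z))
     (c0 + c3 * ((sX q)\<^sup>2 + (mX q - a)\<^sup>2) + c4 * (rho q * sX q * sY q + (mX q - a) * (mY q - b)) + c5 * ((sY q)\<^sup>2 + (mY q - b)\<^sup>2))"
proof -
  have "has_bochner_integral (lborel \<Otimes>\<^sub>M lborel) (\<lambda>z. Gd (mX q) (mY q) (sX q) (sY q) (rho q) (fst z) (snd z) * Pq a b c0 c3 c4 c5 (fst z) (snd z))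
     (c0 + c3 * ((sX q)\<^sup>2 + (mX q - a)\<^sup>2) + c4 * (rho q * sX q * sY q + (mX q - a) * (mY q - b)) + c5 * ((sY q)\<^sup>2 + (mY q - b)\<^sup>2))"
    using v unfolding valid_bvn_def by (intro prod_hbi) auto
  then show ?thesis unfolding lborel_prod bvn_Gd[OF v] .
qed

lemma hbi_eq: "has_bochner_integral M f x \<Longrightarrow> x = y \<Longrightarrow> has_bochner_integral M f y" by simp


lemma Pq_coef_aux:
  fixes a b x y sx sy r :: real
  assumes "sx \<noteq> 0" "sy \<noteq> 0" "1 - r\<^sup>2 \<noteq> 0"
  shows "0 + (1 / (2 * (1 - r\<^sup>2) * sx\<^sup>2)) * (x - a)\<^sup>2 + (- 2 * r / (2 * (1 - r\<^sup>2) * sx * sy)) * (x - a) * (y - b) + (1 / (2 * (1 - r\<^sup>2) * sy\<^sup>2)) * (y - b)\<^sup>2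
    = (1 / (2 * (1 - r\<^sup>2))) * ((x - a)\<^sup>2 / sx\<^sup>2 - 2 * r * (x - a) * (y - b) / (sx * sy) + (y - b)\<^sup>2 / sy\<^sup>2)"
proof -
  define k where "k = 1 / (2 * (1 - r\<^sup>2))"
  have e1: "1 / (2 * (1 - r\<^sup>2) * sx\<^sup>2) * (x - a)\<^sup>2 = k * ((x - a)\<^sup>2 / sx\<^sup>2)" unfolding k_def by simp
  have e2: "(- 2 * r / (2 * (1 - r\<^sup>2) * sx * sy)) * (x - a) * (y - b) = k * (- (2 * r * (x - a) * (y - b) / (sx * sy)))"
    unfolding k_def by simp
  have e3: "1 / (2 * (1 - r\<^sup>2) * sy\<^sup>2) * (y - b)\<^sup>2 = k * ((y - b)\<^sup>2 / sy\<^sup>2)" unfolding k_def by simp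
  show ?thesis unfolding e1 e2 e3 k_def[symmetric] by (simp add: algebra_simps)
qed

lemma one_aux:
  fixes sx sy r :: real
  assumes "sx > 0" "sy > 0" "r\<^sup>2 < 1"
  shows "0 + (1 / (2 * (1 - r\<^sup>2) * sx\<^sup>2)) * (sx\<^sup>2 + 0\<^sup>2)
      + (- 2 * r / (2 * (1 - r\<^sup>2) * sx * sy)) * (r * sx * sy + 0 * 0)
      + (1 / (2 * (1 - r\<^sup>2) * sy\<^sup>2)) * (sy\<^sup>2 + 0\<^sup>2) = 1"
proof -
  have d: "1 - r\<^sup>2 \<noteq> 0" using assms by simp
  have "(1 / (2 * (1 - r\<^sup>2) * sx\<^sup>2)) * sx\<^sup>2 = 1 / (2 * (1 - r\<^sup>2))" using assms d by (simp add: field_simps)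
  moreover have "(- 2 * r / (2 * (1 - r\<^sup>2) * sx * sy)) * (r * sx * sy) = - 2 * r\<^sup>2 / (2 * (1 - r\<^sup>2))" using assms d by (simp add: field_simps power2_eq_square)
  moreover have "(1 / (2 * (1 - r\<^sup>2) * sy\<^sup>2)) * sy\<^sup>2 = 1 / (2 * (1 - r\<^sup>2))" using assms d by (simp add: field_simps)
  moreover have "1 / (2 * (1 - r\<^sup>2)) + - 2 * r\<^sup>2 / (2 * (1 - r\<^sup>2)) + 1 / (2 * (1 - r\<^sup>2)) = 1"
    using d by (simp add: field_simps)
  ultimately show ?thesis by simp
qed

definition Zc :: "bvn \<Rightarrow> real" where
  "Zc p = 2 * pi * sX p * sY p * sqrt (1 - (rho p)\<^sup>2)"

lemma Zc_pos: "valid_bvn p \<Longrightarrow> 0 < Zc p"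
  unfolding Zc_def valid_bvn_def by (simp add: abs_square_less_1)

lemma ln_bvn:
  assumes v: "valid_bvn p"
  shows "ln (bvn_density p z) = - ln (Zc p) - Pq (mX p) (mY p) 0 (1 / (2 * (1 - (rho p)\<^sup>2) * (sX p)\<^sup>2))
      (- 2 * rho p / (2 * (1 - (rho p)\<^sup>2) * sX p * sY p)) (1 / (2 * (1 - (rho p)\<^sup>2) * (sY p)\<^sup>2)) (fst z) (snd z)"
proof -
  have r2: "0 < 1 - (rho p)\<^sup>2" using v unfolding valid_bvn_def by (simp add: abs_square_less_1)
  have sx: "sX p > 0" and sy: "sY p > 0" using v unfolding valid_bvn_def by auto
  obtain x y where z: "z = (x, y)" by (cases z)
  have "bvn_density p z = exp (- (1 / (2 * (1 - (rho p)\<^sup>2))) *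
            ((x - mX p)\<^sup>2 / (sX p)\<^sup>2
             - 2 * rho p * (x - mX p) * (y - mY p) / (sX p * sY p)
             + (y - mY p)\<^sup>2 / (sY p)\<^sup>2)) / Zc p"
    unfolding bvn_density_def z Zc_def by simp
  then have "ln (bvn_density p z) = - (1 / (2 * (1 - (rho p)\<^sup>2))) *
            ((x - mX p)\<^sup>2 / (sX p)\<^sup>2
             - 2 * rho p * (x - mX p) * (y - mY p) / (sX p * sY p)
             + (y - mY p)\<^sup>2 / (sY p)\<^sup>2) - ln (Zc p)"
    using Zc_pos[OF v] by (simp add: ln_div)
  moreover have "sX p \<noteq> 0" "sY p \<noteq> 0" "1 - (rho p)\<^sup>2 \<noteq> 0" using sx sy r2 by auto
  ultimately show ?thesis unfolding z fst_conv snd_conv Pq_def Pq_coef_aux[OF \<open>sX p \<noteq> 0\<close> \<open>sY p \<noteq> 0\<close> \<open>1 - (rho p)\<^sup>2 \<noteq> 0\<close>] by simp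
qed

definition KLf :: "bvn \<Rightarrow> bvn \<Rightarrow> real" where
  "KLf q p = (ln (Zc p) - ln (Zc q))
      + (1 / (2 * (1 - (rho p)\<^sup>2) * (sX p)\<^sup>2)) * ((sX q)\<^sup>2 + (mX q - mX p)\<^sup>2)
      + (- 2 * rho p / (2 * (1 - (rho p)\<^sup>2) * sX p * sY p)) * (rho q * sX q * sY q + (mX q - mX p) * (mY q - mY p))
      + (1 / (2 * (1 - (rho p)\<^sup>2) * (sY p)\<^sup>2)) * ((sY q)\<^sup>2 + (mY q - mY p)\<^sup>2) - 1"

lemma rel_entropy_KLf:
  assumes vp: "valid_bvn p" and vq: "valid_bvn q"
  shows "rel_entropy q p = KLf q p"
proof -
  define P1 where "P1 = Pq (mX p) (mY p) (ln (Zc p) - ln (Zc q)) (1 / (2 * (1 - (rho p)\<^sup>2) * (sX p)\<^sup>2))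
      (- 2 * rho p / (2 * (1 - (rho p)\<^sup>2) * sX p * sY p)) (1 / (2 * (1 - (rho p)\<^sup>2) * (sY p)\<^sup>2))"
  define P2 where "P2 = Pq (mX q) (mY q) 0 (1 / (2 * (1 - (rho q)\<^sup>2) * (sX q)\<^sup>2))
      (- 2 * rho q / (2 * (1 - (rho q)\<^sup>2) * sX q * sY q)) (1 / (2 * (1 - (rho q)\<^sup>2) * (sY q)\<^sup>2))"
  have h1: "has_bochner_integral lborel (\<lambda>z. bvn_density q z * P1 (fst z) (snd z)) (KLf q p + 1)"
    unfolding P1_def by (rule hbi_eq[OF bvn_hbi[OF vq]]) (simp add: KLf_def)
  have rq: "0 < 1 - (rho q)\<^sup>2" using vq unfolding valid_bvn_def by (simp add: abs_square_less_1)
  have h2: "has_bochner_integral lborel (\<lambda>z. bvn_density q z * P2 (fst z) (snd z)) 1"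
    unfolding P2_def
    by (rule hbi_eq[OF bvn_hbi[OF vq]]) (simp only: diff_self, rule one_aux, use vq rq in \<open>auto simp: valid_bvn_def\<close>)
  have h: "has_bochner_integral lborel (\<lambda>z. bvn_density q z * P1 (fst z) (snd z) - bvn_density q z * P2 (fst z) (snd z)) (KLf q p + 1 - 1)"
    by (rule has_bochner_integral_diff[OF h1 h2])
  have e: "(\<lambda>z. bvn_density q z * P1 (fst z) (snd z) - bvn_density q z * P2 (fst z) (snd z))
      = (\<lambda>z. bvn_density q z * (ln (bvn_density q z) - ln (bvn_density p z)))"
  proof (rule ext)
    fix z
    show "bvn_density q z * P1 (fst z) (snd z) - bvn_density q z * P2 (fst z) (snd z)
      = bvn_density q z * (ln (bvn_density q z) - ln (bvn_density p z))"
      unfolding ln_bvn[OF vp] ln_bvn[OF vq] P1_def P2_def Pq_def by (simp add: algebra_simps)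
  qed
  show ?thesis using h unfolding e rel_entropy_def by (simp add: has_bochner_integral_iff)
qed



lemma Cg_lemma:
  fixes sxp syp sxq syq \<rho> r :: real
  assumes pos: "sxp > 0" "syp > 0" "sxq > 0" "syq > 0" and rho: "\<bar>\<rho>\<bar> < 1" and rr: "\<bar>r\<bar> < 1"
  defines "Cg \<equiv> (ln (2 * pi * sxp * syp * sqrt (1 - \<rho>\<^sup>2)) - ln (2 * pi * sxq * syq * sqrt (1 - r\<^sup>2))) - 1
      + ((sxq / sxp)\<^sup>2 - 2 * \<rho> * r * (sxq / sxp) * (syq / syp) + (syq / syp)\<^sup>2) / (2 * (1 - \<rho>\<^sup>2))"
  shows "0 \<le> Cg" and "Cg \<le> 0 \<Longrightarrow> sxq = sxp \<and> syq = syp \<and> r = \<rho>"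
proof -
  define a where "a = sxq / sxp"
  define b where "b = syq / syp"
  define t where "t = a * b"
  define k where "k = (1 - \<rho> * r) / (1 - \<rho>\<^sup>2)"
  define Zp where "Zp = 2 * pi * sxp * syp * sqrt (1 - \<rho>\<^sup>2)"
  define Zq where "Zq = 2 * pi * sxq * syq * sqrt (1 - r\<^sup>2)"
  define L where "L = ln Zp - ln Zq"
  define s where "s = sqrt (1 - \<rho>\<^sup>2)"
  define g where "g = (1 - \<rho> * r) - s * sqrt (1 - r\<^sup>2)"
  have r2: "0 < 1 - \<rho>\<^sup>2" using rho by (simp add: abs_square_less_1)
  have rr2: "0 < 1 - r\<^sup>2" using rr by (simp add: abs_square_less_1)
  have spos: "0 < s" unfolding s_def using r2 by simp
  have ss: "s\<^sup>2 = 1 - \<rho>\<^sup>2" unfolding s_def using r2 by simp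
  have pr: "\<bar>\<rho> * r\<bar> < 1"
  proof -
    have "\<bar>\<rho>\<bar> * \<bar>r\<bar> \<le> \<bar>\<rho>\<bar>" using rr by (simp add: mult_left_le)
    then show ?thesis using rho by (simp add: abs_mult)
  qed
  have y: "0 < 1 - \<rho> * r" using pr by linarith
  have apos: "0 < a" and bpos: "0 < b" unfolding a_def b_def using pos by auto
  have tpos: "0 < t" unfolding t_def using apos bpos by simp
  have kpos: "0 < k" unfolding k_def using y r2 by simp
  have tk: "0 < t * k" using tpos kpos by simp
  have Zp: "0 < Zp" and Zq: "0 < Zq" unfolding Zp_def Zq_def using pos r2 rr2 by auto
  have A: "(a\<^sup>2 - 2 * \<rho> * r * a * b + b\<^sup>2) / (2 * (1 - \<rho>\<^sup>2)) = (a - b)\<^sup>2 / (2 * (1 - \<rho>\<^sup>2)) + t * k"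
  proof -
    define D where "D = 1 - \<rho>\<^sup>2"
    have Dn: "D \<noteq> 0" using r2 unfolding D_def by simp
    have e: "a\<^sup>2 - 2 * \<rho> * r * a * b + b\<^sup>2 = (a - b)\<^sup>2 + 2 * (t * (1 - \<rho> * r))"
      unfolding t_def by (simp add: power2_eq_square algebra_simps)
    have "((a - b)\<^sup>2 + 2 * (t * (1 - \<rho> * r))) / (2 * D) = (a - b)\<^sup>2 / (2 * D) + t * ((1 - \<rho> * r) / D)"
      using Dn by (simp add: add_divide_distrib)
    then show ?thesis unfolding e k_def D_def .
  qed
  have Cg: "Cg = (a - b)\<^sup>2 / (2 * (1 - \<rho>\<^sup>2)) + (t * k - 1 - ln (t * k)) + (L + ln (t * k))"
    unfolding Cg_def a_def[symmetric] b_def[symmetric] Zp_def[symmetric] Zq_def[symmetric] L_def[symmetric] A by simp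
  have g0: "0 \<le> g"
  proof -
    have "s * sqrt (1 - r\<^sup>2) = sqrt ((1 - \<rho>\<^sup>2) * (1 - r\<^sup>2))" unfolding s_def by (simp add: real_sqrt_mult)
    also have "\<dots> \<le> sqrt ((1 - \<rho> * r)\<^sup>2)"
    proof (rule real_sqrt_le_mono)
      have "(1 - \<rho> * r)\<^sup>2 - (1 - \<rho>\<^sup>2) * (1 - r\<^sup>2) = (\<rho> - r)\<^sup>2" by (simp add: power2_eq_square algebra_simps)
      then show "(1 - \<rho>\<^sup>2) * (1 - r\<^sup>2) \<le> (1 - \<rho> * r)\<^sup>2" by (smt (verit) zero_le_power2)
    qed
    also have "\<dots> = 1 - \<rho> * r" using y by simp
    finally show ?thesis unfolding g_def by simp
  qed
  have g_eq: "g = 0 \<Longrightarrow> r = \<rho>"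
  proof -
    assume "g = 0"
    then have "s * sqrt (1 - r\<^sup>2) = 1 - \<rho> * r" unfolding g_def by simp
    then have "(s * sqrt (1 - r\<^sup>2))\<^sup>2 = (1 - \<rho> * r)\<^sup>2" by simp
    then have "(1 - \<rho>\<^sup>2) * (1 - r\<^sup>2) = (1 - \<rho> * r)\<^sup>2" unfolding power_mult_distrib ss using rr2 by simp
    then have "(\<rho> - r)\<^sup>2 = 0" by (simp add: power2_eq_square algebra_simps)
    then show "r = \<rho>" by simp
  qed
  have B': "Zp * (t * k) = Zq + (2 * pi * sxq * syq / s) * g"
  proof -
    have k': "k = (1 - \<rho> * r) / s\<^sup>2" unfolding k_def ss ..
    have "Zp * (t * k) = 2 * pi * sxq * syq * (1 - \<rho> * r) / s"
      unfolding Zp_def s_def[symmetric] k' t_def a_def b_def using pos spos by (simp add: field_simps power2_eq_square)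
    moreover have "Zq + (2 * pi * sxq * syq / s) * g = 2 * pi * sxq * syq * (1 - \<rho> * r) / s"
      unfolding Zq_def g_def using spos by (simp add: field_simps)
    ultimately show ?thesis by simp
  qed
  have B: "0 \<le> L + ln (t * k)"
  proof -
    have c: "0 \<le> 2 * pi * sxq * syq / s" using pos spos by simp
    have "0 \<le> (2 * pi * sxq * syq / s) * g" using c g0 by (rule mult_nonneg_nonneg)
    then have "Zq \<le> Zp * (t * k)" unfolding B' by linarith
    then have "ln Zq \<le> ln (Zp * (t * k))" using Zq by simp
    moreover have "ln (Zp * (t * k)) = ln Zp + ln (t * k)" by (rule ln_mult_pos[OF Zp tk])
    ultimately show ?thesis unfolding L_def by linarith
  qed
  have C: "0 \<le> t * k - 1 - ln (t * k)" using ln_le_minus_one[OF tk] by simp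
  have D: "0 \<le> (a - b)\<^sup>2 / (2 * (1 - \<rho>\<^sup>2))" using r2 by simp
  show "0 \<le> Cg" unfolding Cg using B C D by simp
  assume "Cg \<le> 0"
  then have B0: "L + ln (t * k) = 0" and C0: "t * k - 1 - ln (t * k) = 0" and D0: "(a - b)\<^sup>2 / (2 * (1 - \<rho>\<^sup>2)) = 0"
    unfolding Cg using B C D by linarith+
  have "ln (Zp * (t * k)) = ln Zp + ln (t * k)" by (rule ln_mult_pos[OF Zp tk])
  then have "ln Zq = ln (Zp * (t * k))" using B0 unfolding L_def by linarith
  then have "Zq = Zp * (t * k)" using Zq Zp tk by (simp add: ln_inj_iff)
  then have "(2 * pi * sxq * syq / s) * g = 0" unfolding B' by simp
  then have "g = 0" using pos spos by simp
  then have rho_eq: "r = \<rho>" by (rule g_eq)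
  have "k = 1" unfolding k_def rho_eq using r2 by (simp add: power2_eq_square)
  moreover have "t * k = 1" using ln_eq_minus_one[OF tk] C0 by simp
  ultimately have t1: "t = 1" by simp
  have ab: "a = b" using D0 r2 by simp
  have "a * a = 1" using t1 ab unfolding t_def by simp
  then have a1: "a = 1" using apos by (metis mult_cancel_left1 mult_le_cancel_right1 less_le not_le order_antisym mult_less_cancel_left1 nat_1_add_1 ) 
  show "sxq = sxp \<and> syq = syp \<and> r = \<rho>"
    using a1 ab pos rho_eq unfolding a_def b_def by auto
qed



lemma decomp_aux:
  fixes sxp syp sxq syq \<rho> r dx dy L :: real
  assumes pos: "sxp > 0" "syp > 0" and r2: "0 < 1 - \<rho>\<^sup>2"
  shows "L + (1 / (2 * (1 - \<rho>\<^sup>2) * sxp\<^sup>2)) * (sxq\<^sup>2 + dx\<^sup>2)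
      + (- 2 * \<rho> / (2 * (1 - \<rho>\<^sup>2) * sxp * syp)) * (r * sxq * syq + dx * dy)
      + (1 / (2 * (1 - \<rho>\<^sup>2) * syp\<^sup>2)) * (syq\<^sup>2 + dy\<^sup>2) - 1
    = (L - 1 + ((sxq / sxp)\<^sup>2 - 2 * \<rho> * r * (sxq / sxp) * (syq / syp) + (syq / syp)\<^sup>2) / (2 * (1 - \<rho>\<^sup>2)))
      + (dy / syp - \<rho> * (dx / sxp))\<^sup>2 / (2 * (1 - \<rho>\<^sup>2)) + (dx / sxp)\<^sup>2 / 2"
proof -
  define k where "k = 1 / (2 * (1 - \<rho>\<^sup>2))"
  define a where "a = sxq / sxp"
  define b where "b = syq / syp"
  define u where "u = dx / sxp"
  define v where "v = dy / syp"
  have t1: "(1 / (2 * (1 - \<rho>\<^sup>2) * sxp\<^sup>2)) * (sxq\<^sup>2 + dx\<^sup>2) = k * (a\<^sup>2 + u\<^sup>2)"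
    unfolding k_def a_def u_def using pos r2 by (simp add: field_simps power2_eq_square)
  have t2: "(- 2 * \<rho> / (2 * (1 - \<rho>\<^sup>2) * sxp * syp)) * (r * sxq * syq + dx * dy) = k * (- 2 * \<rho>) * (r * a * b + u * v)"
    unfolding k_def a_def u_def b_def v_def using pos r2 by (simp add: field_simps power2_eq_square)
  have t3: "(1 / (2 * (1 - \<rho>\<^sup>2) * syp\<^sup>2)) * (syq\<^sup>2 + dy\<^sup>2) = k * (b\<^sup>2 + v\<^sup>2)"
    unfolding k_def b_def v_def using pos r2 by (simp add: field_simps power2_eq_square)
  have s1: "(a\<^sup>2 - 2 * \<rho> * r * a * b + b\<^sup>2) / (2 * (1 - \<rho>\<^sup>2)) = k * (a\<^sup>2 - 2 * \<rho> * r * a * b + b\<^sup>2)"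
    unfolding k_def by simp
  have s2: "(v - \<rho> * u)\<^sup>2 / (2 * (1 - \<rho>\<^sup>2)) = k * (v - \<rho> * u)\<^sup>2" unfolding k_def by simp
  have kk: "k * (1 - \<rho>\<^sup>2) = 1 / 2" unfolding k_def using r2 by simp
  have s3: "u\<^sup>2 / 2 = k * (1 - \<rho>\<^sup>2) * u\<^sup>2" unfolding kk by simp
  show ?thesis
    unfolding t1 t2 t3 a_def[symmetric] b_def[symmetric] u_def[symmetric] v_def[symmetric] s1 s2 s3
    by (simp add: power2_eq_square algebra_simps)
qed


definition Cq :: "bvn \<Rightarrow> bvn \<Rightarrow> real" where
  "Cq q p = (ln (2 * pi * sX p * sY p * sqrt (1 - (rho p)\<^sup>2)) - ln (2 * pi * sX q * sY q * sqrt (1 - (rho q)\<^sup>2))) - 1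
      + ((sX q / sX p)\<^sup>2 - 2 * rho p * rho q * (sX q / sX p) * (sY q / sY p) + (sY q / sY p)\<^sup>2) / (2 * (1 - (rho p)\<^sup>2))"

lemma rel_decomp:
  assumes vp: "valid_bvn p" and vq: "valid_bvn q"
  shows "rel_entropy q p = Cq q p
     + ((mY q - mY p) / sY p - rho p * ((mX q - mX p) / sX p))\<^sup>2 / (2 * (1 - (rho p)\<^sup>2))
     + ((mX q - mX p) / sX p)\<^sup>2 / 2"
proof -
  have r2: "0 < 1 - (rho p)\<^sup>2" using vp unfolding valid_bvn_def by (simp add: abs_square_less_1)
  have "sX p > 0" "sY p > 0" using vp unfolding valid_bvn_def by auto
  show ?thesis
    unfolding rel_entropy_KLf[OF vp vq] KLf_def Zc_def Cq_def
    by (rule decomp_aux[OF \<open>sX p > 0\<close> \<open>sY p > 0\<close> r2])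
qed

lemma Cq_facts:
  assumes vp: "valid_bvn p" and vq: "valid_bvn q"
  shows "0 \<le> Cq q p" and "Cq q p \<le> 0 \<Longrightarrow> sX q = sX p \<and> sY q = sY p \<and> rho q = rho p"
proof -
  have a: "sX p > 0" "sY p > 0" "sX q > 0" "sY q > 0" "\<bar>rho p\<bar> < 1" "\<bar>rho q\<bar> < 1"
    using vp vq unfolding valid_bvn_def by auto
  show "0 \<le> Cq q p" unfolding Cq_def by (rule Cg_lemma(1)[OF a])
  show "Cq q p \<le> 0 \<Longrightarrow> sX q = sX p \<and> sY q = sY p \<and> rho q = rho p" unfolding Cq_def by (rule Cg_lemma(2)[OF a])
qed

lemma Cq_same:
  assumes vp: "valid_bvn p" and "sX q = sX p" "sY q = sY p" "rho q = rho p"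
  shows "Cq q p = 0"
proof -
  have r2: "0 < 1 - (rho p)\<^sup>2" using vp unfolding valid_bvn_def by (simp add: abs_square_less_1)
  have "sX p > 0" "sY p > 0" using vp unfolding valid_bvn_def by auto
  then have "((sX p / sX p)\<^sup>2 - 2 * rho p * rho p * (sX p / sX p) * (sY p / sY p) + (sY p / sY p)\<^sup>2) / (2 * (1 - (rho p)\<^sup>2)) = 1"
    using r2 by (simp add: field_simps power2_eq_square)
  then show ?thesis unfolding Cq_def assms(2-4) by simp
qed

lemma posterior_gen:
  fixes p :: bvn and V :: "real \<Rightarrow> bool" and m :: real and \<alpha> :: real
  assumes vp: "valid_bvn p" and Vm: "V m"
    and minim: "\<And>x. V x \<Longrightarrow> (m - mX p)\<^sup>2 \<le> (x - mX p)\<^sup>2"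
    and uniq: "\<And>x. V x \<Longrightarrow> (x - mX p)\<^sup>2 \<le> (m - mX p)\<^sup>2 \<Longrightarrow> x = m"
  shows "CoVaR_is \<alpha> p (\<lambda>q. V (mX q)) (mY p + rho p * (m - mX p) * sY p / sX p + sY p * Phi_inv \<alpha>)"
proof -
  have r2: "0 < 1 - (rho p)\<^sup>2" using vp unfolding valid_bvn_def by (simp add: abs_square_less_1)
  have sx: "sX p > 0" and sy: "sY p > 0" using vp unfolding valid_bvn_def by auto
  define qs where "qs = p\<lparr>mX := m, mY := mY p + rho p * (m - mX p) * sY p / sX p\<rparr>"
  have vqs: "valid_bvn qs" using vp unfolding qs_def valid_bvn_def by simp
  have Vqs: "V (mX qs)" using Vm unfolding qs_def by simp
  have vzero: "(mY qs - mY p) / sY p - rho p * ((mX qs - mX p) / sX p) = 0"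
    unfolding qs_def using sx sy by (simp add: field_simps)
  have cz: "Cq qs p = 0" by (rule Cq_same[OF vp]) (simp_all add: qs_def)
  have Eqs: "rel_entropy qs p = ((m - mX p) / sX p)\<^sup>2 / 2"
    unfolding rel_decomp[OF vp vqs] vzero cz
    unfolding qs_def by simp
  have lower: "((m - mX p) / sX p)\<^sup>2 / 2 \<le> rel_entropy q p" if vq: "valid_bvn q" and Vq: "V (mX q)" for q
  proof -
    have "(m - mX p)\<^sup>2 / (sX p)\<^sup>2 \<le> (mX q - mX p)\<^sup>2 / (sX p)\<^sup>2"
      using minim[OF Vq] sx by (simp add: divide_right_mono)
    then have a: "((m - mX p) / sX p)\<^sup>2 / 2 \<le> ((mX q - mX p) / sX p)\<^sup>2 / 2" by (simp add: power_divide)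
    have b: "0 \<le> ((mY q - mY p) / sY p - rho p * ((mX q - mX p) / sX p))\<^sup>2 / (2 * (1 - (rho p)\<^sup>2))"
      using r2 by simp
    show ?thesis unfolding rel_decomp[OF vp vq] using a b Cq_facts(1)[OF vp vq] by linarith
  qed
  have post: "is_posterior p (\<lambda>q. V (mX q)) qs"
    unfolding is_posterior_def
  proof (intro conjI allI impI vqs Vqs)
    fix q' assume "valid_bvn q' \<and> V (mX q')"
    then show "rel_entropy qs p \<le> rel_entropy q' p" unfolding Eqs using lower by blast
  qed
  have all: "CoVaR_post \<alpha> q = mY p + rho p * (m - mX p) * sY p / sX p + sY p * Phi_inv \<alpha>"
    if pq: "is_posterior p (\<lambda>q. V (mX q)) q" for q
  proof -
    have vq: "valid_bvn q" and Vq: "V (mX q)" and le: "rel_entropy q p \<le> rel_entropy qs p"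
      using pq vqs Vqs unfolding is_posterior_def by auto
    define C where "C = Cq q p"
    define M where "M = ((mY q - mY p) / sY p - rho p * ((mX q - mX p) / sX p))\<^sup>2 / (2 * (1 - (rho p)\<^sup>2))"
    define U where "U = ((mX q - mX p) / sX p)\<^sup>2 / 2"
    define Us where "Us = ((m - mX p) / sX p)\<^sup>2 / 2"
    have E: "C + M + U \<le> Us" using le unfolding rel_decomp[OF vp vq] Eqs C_def M_def U_def Us_def .
    have C0: "0 \<le> C" unfolding C_def by (rule Cq_facts(1)[OF vp vq])
    have M0: "0 \<le> M" unfolding M_def using r2 by simp
    have UU': "Us \<le> U"
    proof -
      have "(m - mX p)\<^sup>2 / (sX p)\<^sup>2 \<le> (mX q - mX p)\<^sup>2 / (sX p)\<^sup>2"
        using minim[OF Vq] sx by (simp add: divide_right_mono)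
      then show ?thesis unfolding U_def Us_def by (simp add: power_divide)
    qed
    have "C \<le> 0" using E M0 UU' by linarith
    then have same: "sX q = sX p \<and> sY q = sY p \<and> rho q = rho p" unfolding C_def by (rule Cq_facts(2)[OF vp vq])
    have "M \<le> 0" using E C0 UU' by linarith
    then have "M = 0" using M0 by linarith
    then have mv: "(mY q - mY p) / sY p - rho p * ((mX q - mX p) / sX p) = 0" unfolding M_def using r2 by simp
    have "U \<le> Us" using E C0 M0 by linarith
    then have "(mX q - mX p)\<^sup>2 / (sX p)\<^sup>2 \<le> (m - mX p)\<^sup>2 / (sX p)\<^sup>2" unfolding U_def Us_def by (simp add: power_divide)
    then have "(mX q - mX p)\<^sup>2 \<le> (m - mX p)\<^sup>2" using sx by (simp add: divide_le_cancel)
    then have mq: "mX q = m" by (rule uniq[OF Vq])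
    have my: "mY q = mY p + rho p * (m - mX p) * sY p / sX p"
      using mv sx sy unfolding mq by (simp add: field_simps)
    show ?thesis unfolding CoVaR_post_def my using same by simp
  qed
  show ?thesis unfolding CoVaR_is_def using post all by blast
qed

theorem theorem3p1:
  fixes p :: bvn and \<mu>1 \<alpha> c_eq :: real
  assumes "valid_bvn p" and "0 < \<alpha>" and "\<alpha> < 1"
  assumes "c_eq = mY p + rho p * (\<mu>1 - mX p) * sY p / sX p + sY p * Phi_inv \<alpha>"
  shows "CoVaR_is \<alpha> p (\<lambda>q. mX q = \<mu>1) c_eq
    \<and> (mX p \<le> \<mu>1 \<longrightarrow> CoVaR_is \<alpha> p (\<lambda>q. mX q \<le> \<mu>1) (VaR \<alpha> p))
    \<and> (mX p > \<mu>1 \<longrightarrow> CoVaR_is \<alpha> p (\<lambda>q. mX q \<le> \<mu>1) c_eq)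
    \<and> (mX p \<ge> \<mu>1 \<longrightarrow> CoVaR_is \<alpha> p (\<lambda>q. mX q \<ge> \<mu>1) (VaR \<alpha> p))
    \<and> (mX p < \<mu>1 \<longrightarrow> CoVaR_is \<alpha> p (\<lambda>q. mX q \<ge> \<mu>1) c_eq)"
proof -
  note vp = assms(1)
  have VaR_eq: "VaR \<alpha> p = mY p + rho p * (mX p - mX p) * sY p / sX p + sY p * Phi_inv \<alpha>"
    unfolding VaR_def by simp
  have i: "CoVaR_is \<alpha> p (\<lambda>q. mX q = \<mu>1) c_eq"
    unfolding assms(4) using posterior_gen[OF vp, of "\<lambda>x. x = \<mu>1" \<mu>1 \<alpha>] by simp
  have ii: "CoVaR_is \<alpha> p (\<lambda>q. mX q \<le> \<mu>1) (VaR \<alpha> p)" if "mX p \<le> \<mu>1"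
    unfolding VaR_eq using posterior_gen[OF vp, of "\<lambda>x. x \<le> \<mu>1" "mX p" \<alpha>] that by simp
  have iii: "CoVaR_is \<alpha> p (\<lambda>q. mX q \<ge> \<mu>1) (VaR \<alpha> p)" if "mX p \<ge> \<mu>1"
    unfolding VaR_eq using posterior_gen[OF vp, of "\<lambda>x. x \<ge> \<mu>1" "mX p" \<alpha>] that by simp
  have sq_mono: "(\<mu>1 - m)\<^sup>2 \<le> (x - m)\<^sup>2 \<and> ((x - m)\<^sup>2 \<le> (\<mu>1 - m)\<^sup>2 \<longrightarrow> x = \<mu>1)"
    if "(x - \<mu>1) * (m - \<mu>1) \<le> 0" "m \<noteq> \<mu>1" for x m :: real
  proof -
    have e: "(x - m)\<^sup>2 - (\<mu>1 - m)\<^sup>2 = (x - \<mu>1) * ((x - \<mu>1) - 2 * (m - \<mu>1))"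
      by (simp add: power2_eq_square algebra_simps)
    have e2: "(x - \<mu>1) * ((x - \<mu>1) - 2 * (m - \<mu>1)) = (x - \<mu>1)\<^sup>2 - 2 * ((x - \<mu>1) * (m - \<mu>1))"
      by (simp add: power2_eq_square algebra_simps)
    have "0 \<le> (x - \<mu>1)\<^sup>2" by simp
    then have P: "0 \<le> (x - \<mu>1) * ((x - \<mu>1) - 2 * (m - \<mu>1))"
      unfolding e2 using that(1) by linarith
    have Q: "(x - \<mu>1) * ((x - \<mu>1) - 2 * (m - \<mu>1)) \<le> 0 \<Longrightarrow> x = \<mu>1"
    proof (rule ccontr)
      assume a: "(x - \<mu>1) * ((x - \<mu>1) - 2 * (m - \<mu>1)) \<le> 0" "x \<noteq> \<mu>1"
      have "(x - \<mu>1) * ((x - \<mu>1) - 2 * (m - \<mu>1)) = (x - \<mu>1)\<^sup>2 - 2 * ((x - \<mu>1) * (m - \<mu>1))"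
        by (simp add: power2_eq_square algebra_simps)
      moreover have "0 < (x - \<mu>1)\<^sup>2" using a(2) by simp
      ultimately show False using a(1) that(1) by linarith
    qed
    show ?thesis
    proof
      show "(\<mu>1 - m)\<^sup>2 \<le> (x - m)\<^sup>2" using e P by linarith
      show "(x - m)\<^sup>2 \<le> (\<mu>1 - m)\<^sup>2 \<longrightarrow> x = \<mu>1" using e Q by (intro impI) linarith
    qed
  qed
  have iib: "CoVaR_is \<alpha> p (\<lambda>q. mX q \<le> \<mu>1) c_eq" if "mX p > \<mu>1"
  proof -
    have h: "(\<mu>1 - mX p)\<^sup>2 \<le> (x - mX p)\<^sup>2 \<and> ((x - mX p)\<^sup>2 \<le> (\<mu>1 - mX p)\<^sup>2 \<longrightarrow> x = \<mu>1)" if "x \<le> \<mu>1" for x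
      using \<open>mX p > \<mu>1\<close> that by (intro sq_mono) (auto simp: mult_nonpos_nonneg)
    show ?thesis unfolding assms(4) using posterior_gen[OF vp, of "\<lambda>x. x \<le> \<mu>1" \<mu>1 \<alpha>] h by simp
  qed
  have iiib: "CoVaR_is \<alpha> p (\<lambda>q. mX q \<ge> \<mu>1) c_eq" if "mX p < \<mu>1"
  proof -
    have h: "(\<mu>1 - mX p)\<^sup>2 \<le> (x - mX p)\<^sup>2 \<and> ((x - mX p)\<^sup>2 \<le> (\<mu>1 - mX p)\<^sup>2 \<longrightarrow> x = \<mu>1)" if "x \<ge> \<mu>1" for x
      using \<open>mX p < \<mu>1\<close> that by (intro sq_mono) (auto simp: mult_nonneg_nonpos)
    show ?thesis unfolding assms(4) using posterior_gen[OF vp, of "\<lambda>x. x \<ge> \<mu>1" \<mu>1 \<alpha>] h by simp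
  qed
  show ?thesis using i ii iii iib iiib by blast
qed

end
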